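(* Let $A$ be a superdomain and $S\subseteq A\setminus\{0\}$ with $1\in S$, $S\cdot S\subseteq S$ and $A^2\setminus\{0\}\subseteq S$, where $A^2=\bigcup_{a\in A}a\cdot a$. Then $S$ is a Marshall coherent subset of $A$, and in $A/_mS$ the product $[a][b]$ is a singleton for all $[a],[b]\in A/_mS$.
   Context: Multivalued operations are extended to subsets by unions. A superring is a structure $(S,+,\cdot,-,0,1)$ with multivalued addition and multiplication such that $(S,+,-,0)$ is a commutative multigroup, $(S,\cdot,1)$ is a commutative multimonoid, $a\cdot0=\{0\}$, $c(a+b)\subseteq ca+cb$, and $-(ab)=(-a)b=a(-b)$ (multigroup axioms: $c\in ab\Rightarrow a\in c\,r(b)$ and $b\in r(a)c$; $b\in a\cdot1\iff a=b$; $(ab)c\subseteq a(bc)$; $ab=ba$; multimonoid: the last two and $a\in 1\cdot a$). A superdomain is a nontrivial superring in which $0\in ab$ iff $a=0$ or $b=0$. A subset $S$ of a superring $A$ is Marshall coherent if it is multiplicative ($1\in S$, $S\cdot S\subseteq S$) and whenever $x,a\in A$ and $x\in as$ for some $s\in S$, there are $P,Q\subseteq S$ with $xP=aQ$. For $a,b\in A$, $a\sim_S b$ iff there are nonempty $X,Y\subseteq S$ with $aX=bY$. The Marshall quotient $A/_mS$ is the set of $\sim_S$-classes $[a]$ with: $[c]\in[a]+[b]$ iff there exist $c'\sim c$, $a'\sim a$, $b'\sim b$ with $c'\in a'+b'$; $[c]\in[a][b]$ iff there exist $c'\sim c,a'\sim a,b'\sim b$ with $c'\in a'b'$; $-[a]:=[-a]$;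 zero $[0]$, unit $[1]$. *)

theory Defs
  imports Main
begin

text \<open>A superring is modelled on the whole type 'a (the carrier), with multivalued
  addition and multiplication given as set-valued functions.\<close>

definition lift :: "('a \<Rightarrow> 'a \<Rightarrow> 'a set) \<Rightarrow> 'a set \<Rightarrow> 'a set \<Rightarrow> 'a set" where
  "lift f X Y = (\<Union>x\<in>X. \<Union>y\<in>Y. f x y)"

definition multigroup :: "('a \<Rightarrow> 'a \<Rightarrow> 'a set) \<Rightarrow> ('a \<Rightarrow> 'a) \<Rightarrow> 'a \<Rightarrow> bool" where
  "multigroup op r e \<longleftrightarrow>
     (\<forall>a b c. c \<in> op a b \<longrightarrow> a \<in> op c (r b) \<and> b \<in> op (r a) c) \<and>
     (\<forall>a b. b \<in> op a e \<longleftrightarrow> a = b) \<and>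
     (\<forall>a b c. lift op (op a b) {c} \<subseteq> lift op {a} (op b c)) \<and>
     (\<forall>a b. op a b = op b a)"

definition multimonoid :: "('a \<Rightarrow> 'a \<Rightarrow> 'a set) \<Rightarrow> 'a \<Rightarrow> bool" where
  "multimonoid op e \<longleftrightarrow>
     (\<forall>a b c. lift op (op a b) {c} \<subseteq> lift op {a} (op b c)) \<and>
     (\<forall>a b. op a b = op b a) \<and>
     (\<forall>a. a \<in> op e a)"

definition superring ::
  "('a \<Rightarrow> 'a \<Rightarrow> 'a set) \<Rightarrow> ('a \<Rightarrow> 'a \<Rightarrow> 'a set) \<Rightarrow> ('a \<Rightarrow> 'a) \<Rightarrow> 'a \<Rightarrow> 'a \<Rightarrow> bool" where
  "superring add mul neg zero one \<longleftrightarrow>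
     multigroup add neg zero \<and>
     multimonoid mul one \<and>
     (\<forall>a. mul a zero = {zero}) \<and>
     (\<forall>a b c. lift mul {c} (add a b) \<subseteq> lift add (mul c a) (mul c b)) \<and>
     (\<forall>a b. neg ` (mul a b) = mul (neg a) b \<and> mul (neg a) b = mul a (neg b))"

definition superdomain ::
  "('a \<Rightarrow> 'a \<Rightarrow> 'a set) \<Rightarrow> ('a \<Rightarrow> 'a \<Rightarrow> 'a set) \<Rightarrow> ('a \<Rightarrow> 'a) \<Rightarrow> 'a \<Rightarrow> 'a \<Rightarrow> bool" where
  "superdomain add mul neg zero one \<longleftrightarrow>
     superring add mul neg zero one \<and> zero \<noteq> one \<and>
     (\<forall>a b. zero \<in> mul a b \<longleftrightarrow> a = zero \<or> b = zero)"

definition multiplicative_set :: "('a \<Rightarrow> 'a \<Rightarrow> 'a set) \<Rightarrow> 'a \<Rightarrow> 'a set \<Rightarrow> bool" where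
  "multiplicative_set mul one S \<longleftrightarrow> one \<in> S \<and> lift mul S S \<subseteq> S"

text \<open>Marshall coherence (the witnesses P, Q are taken nonempty).\<close>
definition marshall_coherent :: "('a \<Rightarrow> 'a \<Rightarrow> 'a set) \<Rightarrow> 'a \<Rightarrow> 'a set \<Rightarrow> bool" where
  "marshall_coherent mul one S \<longleftrightarrow>
     multiplicative_set mul one S \<and>
     (\<forall>x a. (\<exists>s\<in>S. x \<in> mul a s) \<longrightarrow>
        (\<exists>P Q. P \<subseteq> S \<and> Q \<subseteq> S \<and> P \<noteq> {} \<and> Q \<noteq> {} \<and> lift mul {x} P = lift mul {a} Q))"

definition msim :: "('a \<Rightarrow> 'a \<Rightarrow> 'a set) \<Rightarrow> 'a set \<Rightarrow> 'a \<Rightarrow> 'a \<Rightarrow> bool" where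
  "msim mul S a b \<longleftrightarrow>
     (\<exists>X Y. X \<subseteq> S \<and> Y \<subseteq> S \<and> X \<noteq> {} \<and> Y \<noteq> {} \<and> lift mul {a} X = lift mul {b} Y)"

definition mclass :: "('a \<Rightarrow> 'a \<Rightarrow> 'a set) \<Rightarrow> 'a set \<Rightarrow> 'a \<Rightarrow> 'a set" where
  "mclass mul S a = {b. msim mul S b a}"

definition mquot_mul :: "('a \<Rightarrow> 'a \<Rightarrow> 'a set) \<Rightarrow> 'a set \<Rightarrow> 'a \<Rightarrow> 'a \<Rightarrow> 'a set set" where
  "mquot_mul mul S a b =
     {mclass mul S c | c. \<exists>c' a' b'. msim mul S c' c \<and> msim mul S a' a \<and> msim mul S b' b \<and>
                                     c' \<in> mul a' b'}"

end

theory Submission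
  imports Defs
begin

locale sdom =
  fixes add mul :: "'a \<Rightarrow> 'a \<Rightarrow> 'a set" and neg :: "'a \<Rightarrow> 'a" and zero one :: 'a
    and S :: "'a set"
  assumes sd: "superdomain add mul neg zero one"
    and S0: "S \<subseteq> UNIV - {zero}"
    and S1: "one \<in> S"
    and SS: "lift mul S S \<subseteq> S"
    and Sq: "(\<Union>a. mul a a) - {zero} \<subseteq> S"
begin

lemma sr: "superring add mul neg zero one" using sd unfolding superdomain_def by blast
lemma mm: "multimonoid mul one" using sr unfolding superring_def by blast
lemma mg: "multigroup add neg zero" using sr unfolding superring_def by blast

lemma comm: "mul a b = mul b a" using mm unfolding multimonoid_def by blast
lemma assoc1: "lift mul (mul a b) {c} \<subseteq> lift mul {a} (mul b c)"
  using mm unfolding multimonoid_def by blast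

lemma liftcomm: "lift mul X Y = lift mul Y X"
  unfolding lift_def using comm by blast

lemma assoc_eq: "lift mul {a} (mul b c) = lift mul (mul a b) {c}"
proof -
  have "lift mul {a} (mul b c) = lift mul (mul b c) {a}" by (rule liftcomm)
  also have "\<dots> \<subseteq> lift mul {b} (mul c a)" by (rule assoc1)
  also have "\<dots> = lift mul (mul c a) {b}" by (rule liftcomm)
  also have "\<dots> \<subseteq> lift mul {c} (mul a b)" by (rule assoc1)
  also have "\<dots> = lift mul (mul a b) {c}" by (rule liftcomm)
  finally have 1: "lift mul {a} (mul b c) \<subseteq> lift mul (mul a b) {c}" .
  show ?thesis using 1 assoc1 by blast
qed

lemma lift_assoc: "lift mul (lift mul X Y) Z = lift mul X (lift mul Y Z)"
proof -
  have "\<And>x y w. lift mul {x} (mul y w) = lift mul (mul x y) {w}" by (rule assoc_eq)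
  then show ?thesis unfolding lift_def by (simp, blast)
qed

lemma lift_sing: "lift mul {a} {b} = mul a b" unfolding lift_def by simp

lemma lift_mono: "X \<subseteq> X' \<Longrightarrow> Y \<subseteq> Y' \<Longrightarrow> lift mul X Y \<subseteq> lift mul X' Y'"
  unfolding lift_def by blast

lemma mul_zero: "mul a zero = {zero}" using sr unfolding superring_def by blast
lemma zero_mul: "mul zero a = {zero}" using mul_zero comm by metis

lemma dom0: "zero \<in> mul a b \<longleftrightarrow> a = zero \<or> b = zero"
  using sd unfolding superdomain_def by blast

lemma nonempty: "mul c b \<noteq> {}"
proof -
  have "b \<in> add b zero" using mg unfolding multigroup_def by blast
  then have z: "zero \<in> add (neg b) b" using mg unfolding multigroup_def by blast
  have d: "lift mul {c} (add (neg b) b) \<subseteq> lift add (mul c (neg b)) (mul c b)"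
    using sr unfolding superring_def by blast
  have "zero \<in> lift mul {c} (add (neg b) b)" using z mul_zero unfolding lift_def by blast
  then have "zero \<in> lift add (mul c (neg b)) (mul c b)" using d by blast
  then show ?thesis unfolding lift_def by blast
qed

lemma lift_ne: "X \<noteq> {} \<Longrightarrow> Y \<noteq> {} \<Longrightarrow> lift mul X Y \<noteq> {}"
proof -
  assume "X \<noteq> {}" "Y \<noteq> {}"
  then obtain x y where "x \<in> X" "y \<in> Y" by blast
  moreover obtain z where "z \<in> mul x y" using nonempty by blast
  ultimately show ?thesis unfolding lift_def by blast
qed

lemma sq: "a \<noteq> zero \<Longrightarrow> mul a a \<subseteq> S"
proof
  fix y assume a: "a \<noteq> zero" and y: "y \<in> mul a a"
  have "y \<noteq> zero" using a y dom0 by auto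
  then have "y \<in> (\<Union>a. mul a a) - {zero}" using y by blast
  then show "y \<in> S" using Sq by blast
qed

lemma four: "lift mul (lift mul A B) (lift mul C D) = lift mul (lift mul A C) (lift mul B D)"
proof -
  have "lift mul (lift mul A B) (lift mul C D) = lift mul A (lift mul B (lift mul C D))"
    by (rule lift_assoc)
  also have "\<dots> = lift mul A (lift mul (lift mul B C) D)" by (simp only: lift_assoc)
  also have "\<dots> = lift mul A (lift mul (lift mul C B) D)" by (simp only: liftcomm[of B C])
  also have "\<dots> = lift mul A (lift mul C (lift mul B D))" by (simp only: lift_assoc)
  also have "\<dots> = lift mul (lift mul A C) (lift mul B D)" by (simp only: lift_assoc)
  finally show ?thesis .
qed

lemma msim_refl: "msim mul S a a"
  unfolding msim_def using S1 by blast

lemma msim_sym: "msim mul S a b \<Longrightarrow> msim mul S b a"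
proof -
  assume "msim mul S a b"
  then obtain X Y where "X \<subseteq> S" "Y \<subseteq> S" "X \<noteq> {}" "Y \<noteq> {}" "lift mul {a} X = lift mul {b} Y"
    unfolding msim_def by blast
  then show ?thesis unfolding msim_def
    apply -
    apply (rule exI[of _ Y], rule exI[of _ X]) by simp
qed

lemma msim_trans:
  assumes "msim mul S a b" "msim mul S b c" shows "msim mul S a c"
proof -
  obtain X Y where XY: "X \<subseteq> S" "Y \<subseteq> S" "X \<noteq> {}" "Y \<noteq> {}" "lift mul {a} X = lift mul {b} Y"
    using assms(1) unfolding msim_def by blast
  obtain Z W where ZW: "Z \<subseteq> S" "W \<subseteq> S" "Z \<noteq> {}" "W \<noteq> {}" "lift mul {b} Z = lift mul {c} W"
    using assms(2) unfolding msim_def by blast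
  have "lift mul {a} (lift mul X Z) = lift mul (lift mul {a} X) Z" by (simp add: lift_assoc)
  also have "\<dots> = lift mul (lift mul {b} Y) Z" using XY by simp
  also have "\<dots> = lift mul {b} (lift mul Z Y)" by (simp add: lift_assoc liftcomm[of Y Z])
  also have "\<dots> = lift mul (lift mul {b} Z) Y" by (simp add: lift_assoc)
  also have "\<dots> = lift mul (lift mul {c} W) Y" using ZW by simp
  also have "\<dots> = lift mul {c} (lift mul W Y)" by (simp add: lift_assoc)
  finally have e: "lift mul {a} (lift mul X Z) = lift mul {c} (lift mul W Y)" .
  have "lift mul X Z \<subseteq> S" using lift_mono[of X S Z S] XY ZW SS by blast
  moreover have "lift mul W Y \<subseteq> S" using lift_mono[of W S Y S] XY ZW SS by blast
  moreover have "lift mul X Z \<noteq> {}" using lift_ne XY(3) ZW(3) by blast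
  moreover have "lift mul W Y \<noteq> {}" using lift_ne XY(4) ZW(4) by blast
  ultimately show ?thesis unfolding msim_def
    apply -
    apply (rule exI[of _ "lift mul X Z"], rule exI[of _ "lift mul W Y"])
    using e by blast
qed

lemma coh:
  assumes "x \<in> mul a s" "s \<in> S" shows "msim mul S x a"
proof (cases "a = zero")
  case True
  then have "x = a" using assms(1) zero_mul by auto
  then show ?thesis using msim_refl by simp
next
  case False
  have P: "mul a a \<subseteq> S" using sq False .
  have Q: "mul x a \<subseteq> S"
  proof
    fix y assume y: "y \<in> mul x a"
    have "mul x a \<subseteq> lift mul (mul a s) {a}" using assms(1) unfolding lift_def by blast
    also have "\<dots> = lift mul {a} (mul a s)" by (rule liftcomm)
    also have "\<dots> = lift mul (mul a a) {s}" by (rule assoc_eq)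
    also have "\<dots> \<subseteq> lift mul S S" using lift_mono[of "mul a a" S "{s}" S] P assms(2) by blast
    finally show "y \<in> S" using y SS by blast
  qed
  have e: "lift mul {x} (mul a a) = lift mul {a} (mul x a)"
    using assoc_eq[of x a a] liftcomm[of "mul x a" "{a}"] by simp
  have n1: "mul a a \<noteq> {}" "mul x a \<noteq> {}" using nonempty by auto
  show ?thesis unfolding msim_def
    apply (rule exI[of _ "mul a a"], rule exI[of _ "mul x a"])
    using P Q e n1 by blast
qed

lemma transfer:
  assumes c: "c \<in> mul a b" and m: "msim mul S a a'"
  shows "\<exists>c'\<in>mul a' b. msim mul S c c'"
proof -
  obtain X Y where XY: "X \<subseteq> S" "Y \<subseteq> S" "X \<noteq> {}" "Y \<noteq> {}"
    "lift mul {a} X = lift mul {a'} Y" using m unfolding msim_def by blast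
  obtain x where x: "x \<in> X" using XY by blast
  obtain d where d: "d \<in> mul c x" using nonempty by blast
  have "d \<in> lift mul {c} X" using d x unfolding lift_def by blast
  also have "\<dots> \<subseteq> lift mul (lift mul {a} {b}) X" using c lift_mono[of "{c}" "mul a b" X X]
    by (simp add: lift_sing)
  also have "\<dots> = lift mul (lift mul {a} X) {b}"
    by (simp add: lift_assoc liftcomm[of "{b}" X])
  also have "\<dots> = lift mul (lift mul {a'} Y) {b}" using XY by simp
  also have "\<dots> = lift mul (lift mul {a'} {b}) Y"
    by (simp add: lift_assoc liftcomm[of "{b}" Y])
  finally have "d \<in> lift mul (mul a' b) Y" by (simp add: lift_sing)
  then obtain c' y where c': "c' \<in> mul a' b" "y \<in> Y" "d \<in> mul c' y" unfolding lift_def by blast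
  have "msim mul S d c" using coh d x XY by blast
  moreover have "msim mul S d c'" using coh c' XY by blast
  ultimately have "msim mul S c c'" using msim_sym msim_trans by blast
  then show ?thesis using c' by blast
qed

lemma same:
  assumes "c1 \<in> mul a b" "c2 \<in> mul a b" shows "msim mul S c1 c2"
proof (cases "a = zero \<or> b = zero")
  case True
  then have "c1 = zero" "c2 = zero" using assms zero_mul mul_zero by auto
  then show ?thesis using msim_refl by simp
next
  case False
  let ?W = "mul a b"
  have ab: "lift mul ?W ?W \<subseteq> S"
  proof -
    have "lift mul ?W ?W = lift mul (lift mul {a} {b}) (lift mul {a} {b})" by (simp add: lift_sing)
    also have "\<dots> = lift mul (lift mul {a} {a}) (lift mul {b} {b})" by (rule four)
    also have "\<dots> = lift mul (mul a a) (mul b b)" by (simp add: lift_sing)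
    also have "\<dots> \<subseteq> lift mul S S" using lift_mono[of "mul a a" S "mul b b" S] sq False by blast
    finally show ?thesis using SS by blast
  qed
  have X: "lift mul {c2} ?W \<subseteq> S" using lift_mono[of "{c2}" ?W ?W ?W] assms ab by blast
  have Y: "lift mul {c1} ?W \<subseteq> S" using lift_mono[of "{c1}" ?W ?W ?W] assms ab by blast
  have e: "lift mul {c1} (lift mul {c2} ?W) = lift mul {c2} (lift mul {c1} ?W)"
  proof -
    have "lift mul {c1} (lift mul {c2} ?W) = lift mul (lift mul {c1} {c2}) ?W"
      by (simp add: lift_assoc)
    also have "\<dots> = lift mul (lift mul {c2} {c1}) ?W" by (simp only: liftcomm[of "{c1}" "{c2}"])
    also have "\<dots> = lift mul {c2} (lift mul {c1} ?W)" by (simp add: lift_assoc)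
    finally show ?thesis .
  qed
  have ne: "mul a b \<noteq> {}" by (rule nonempty)
  have n1: "lift mul {c2} ?W \<noteq> {}" using lift_ne[of "{c2}" ?W] ne by blast
  have n2: "lift mul {c1} ?W \<noteq> {}" using lift_ne[of "{c1}" ?W] ne by blast
  show ?thesis unfolding msim_def
    apply (rule exI[of _ "lift mul {c2} ?W"], rule exI[of _ "lift mul {c1} ?W"])
    using X Y e n1 n2 by blast
qed

lemma mclass_eq: "msim mul S c d \<Longrightarrow> mclass mul S c = mclass mul S d"
  unfolding mclass_def using msim_sym msim_trans by blast

lemma main: "marshall_coherent mul one S \<and> (\<forall>a b. \<exists>C. mquot_mul mul S a b = {C})"
proof
  show "marshall_coherent mul one S"
    unfolding marshall_coherent_def multiplicative_set_def
  proof (intro conjI allI impI)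
    fix x a assume "\<exists>s\<in>S. x \<in> mul a s"
    then have "msim mul S x a" using coh by blast
    then show "\<exists>P Q. P \<subseteq> S \<and> Q \<subseteq> S \<and> P \<noteq> {} \<and> Q \<noteq> {} \<and> lift mul {x} P = lift mul {a} Q"
      unfolding msim_def .
  qed (use S1 SS in auto)
next
  show "\<forall>a b. \<exists>C. mquot_mul mul S a b = {C}"
  proof (intro allI)
    fix a b
    obtain c0 where c0: "c0 \<in> mul a b" using nonempty by blast
    have "mquot_mul mul S a b = {mclass mul S c0}"
    proof
      show "{mclass mul S c0} \<subseteq> mquot_mul mul S a b"
        unfolding mquot_mul_def using c0 msim_refl by blast
    next
      show "mquot_mul mul S a b \<subseteq> {mclass mul S c0}"
      proof
        fix K assume "K \<in> mquot_mul mul S a b"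
        then obtain c c' a' b' where K: "K = mclass mul S c" "msim mul S c' c"
          "msim mul S a' a" "msim mul S b' b" "c' \<in> mul a' b'"
          unfolding mquot_mul_def by blast
        obtain c2 where c2: "c2 \<in> mul a b'" "msim mul S c' c2" using transfer K by blast
        have "c2 \<in> mul b' a" using c2 comm by blast
        then obtain c3 where c3: "c3 \<in> mul b a" "msim mul S c2 c3" using transfer K by blast
        have "c3 \<in> mul a b" using c3 comm by blast
        then have "msim mul S c3 c0" using same c0 by blast
        then have "msim mul S c c0" using K c2 c3 msim_sym msim_trans by blast
        then show "K \<in> {mclass mul S c0}" using K mclass_eq by blast
      qed
    qed
    then show "\<exists>C. mquot_mul mul S a b = {C}" by blast
  qed
qed

end

theorem theorem4p7:
  fixes add mul :: "'a \<Rightarrow> 'a \<Rightarrow> 'a set" and neg :: "'a \<Rightarrow> 'a" and zero one :: 'a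
    and S :: "'a set"
  assumes "superdomain add mul neg zero one"
    and "S \<subseteq> UNIV - {zero}"
    and "one \<in> S"
    and "lift mul S S \<subseteq> S"
    and "(\<Union>a. mul a a) - {zero} \<subseteq> S"
  shows "marshall_coherent mul one S \<and>
         (\<forall>a b. \<exists>C. mquot_mul mul S a b = {C})"
proof -
  interpret sdom add mul neg zero one S using assms by unfold_locales
  show ?thesis by (rule main)
qed

end
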